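(* Let $K$ be a field, $S=K[x_1,\dots,x_n]$, $A\subseteq\{1,\dots,n\}$, $f=\prod_{j\in A}x_j$, and let $uK[Z]$ be a Stanley space of $S_f$. Then $H_{uK[Z]}(t)=Q(t)/(1-t)^m$, where $Q(t)$ is a polynomial with $Q(1)=1$ and $m=|Z|$.
   Context: $S_f=K[x_1,\dots,x_n,x_j^{-1}:j\in A]$ with $K$-basis the monomials $x^a=x_1^{a_1}\cdots x_n^{a_n}$, $a_j\in\mathbb Z$ for $j\in A$, $a_j\in\mathbb N$ otherwise. A Stanley space of $S_f$ is $uK[Z]$, the $K$-span of the monomials $uw$ ($w$ a monomial in the elements of $Z$), where $u$ is a monomial of $S_f$, $Z\subseteq\{x_1,\dots,x_n\}\cup\{x_j^{-1}:j\in A\}$ with $\{x_j,x_j^{-1}\}\not\subseteq Z$ for all $j\in A$, and $uK[Z]$ is a free $K[Z]$-module. It is $\mathbb Z^n$-graded with $x^a$ in degree $a$. For such a graded space $M=\bigoplus_aM_a$ with finite-dimensional components, $|a|=\sum_j|a_j|$, $M_d=\bigoplus_{|a|=d}M_a$, $H(M,d)=\dim_KM_d$, $H_M(t)=\sum_{d\ge0}H(M,d)t^d$. *)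

theory Defs
  imports "HOL-Computational_Algebra.Computational_Algebra"
begin

(* Exponent vectors a : nat => int, with variables indexed by {1..n}; a j = 0 outside {1..n}.
   x^a is a monomial of S_f (f = prod_{j in A} x_j) iff a_j >= 0 for j notin A. *)
definition Sf_monomial :: "nat \<Rightarrow> nat set \<Rightarrow> (nat \<Rightarrow> int) \<Rightarrow> bool" where
  "Sf_monomial n A a \<longleftrightarrow> (\<forall>j. j \<notin> {1..n} \<longrightarrow> a j = 0) \<and> (\<forall>j\<in>{1..n}. j \<notin> A \<longrightarrow> a j \<ge> 0)"

(* Variables of S_f: (j, True) stands for x_j (1 <= j <= n), (j, False) for x_j^{-1} (j in A). *)
definition Sf_vars :: "nat \<Rightarrow> nat set \<Rightarrow> (nat \<times> bool) set" where
  "Sf_vars n A = {(j, True) | j. j \<in> {1..n}} \<union> {(j, False) | j. j \<in> A}"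

definition var_exp :: "nat \<times> bool \<Rightarrow> nat \<Rightarrow> int" where
  "var_exp z i = (if i = fst z then (if snd z then 1 else -1) else 0)"

definition stanley_exp :: "(nat \<Rightarrow> int) \<Rightarrow> (nat \<times> bool) set \<Rightarrow> (nat \<times> bool \<Rightarrow> nat) \<Rightarrow> nat \<Rightarrow> int" where
  "stanley_exp u Z c = (\<lambda>i. u i + (\<Sum>z\<in>Z. int (c z) * var_exp z i))"

definition Z_monomials :: "(nat \<times> bool) set \<Rightarrow> (nat \<times> bool \<Rightarrow> nat) set" where
  "Z_monomials Z = {c. \<forall>z. z \<notin> Z \<longrightarrow> c z = 0}"

(* the K-basis of uK[Z]: exponents of the monomials u w *)
definition stanley_monomials :: "(nat \<Rightarrow> int) \<Rightarrow> (nat \<times> bool) set \<Rightarrow> (nat \<Rightarrow> int) set" where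
  "stanley_monomials u Z = stanley_exp u Z ` Z_monomials Z"

(* uK[Z] is a Stanley space of S_f; freeness as K[Z]-module = the monomials u w are pairwise distinct *)
definition is_stanley_space :: "nat \<Rightarrow> nat set \<Rightarrow> (nat \<Rightarrow> int) \<Rightarrow> (nat \<times> bool) set \<Rightarrow> bool" where
  "is_stanley_space n A u Z \<longleftrightarrow>
     A \<subseteq> {1..n} \<and> Sf_monomial n A u \<and> Z \<subseteq> Sf_vars n A \<and>
     (\<forall>j\<in>A. \<not> ((j, True) \<in> Z \<and> (j, False) \<in> Z)) \<and>
     inj_on (stanley_exp u Z) (Z_monomials Z)"

definition abs_deg :: "nat \<Rightarrow> (nat \<Rightarrow> int) \<Rightarrow> nat" where
  "abs_deg n a = nat (\<Sum>i\<in>{1..n}. \<bar>a i\<bar>)"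

(* H(uK[Z], d) = dim_K of the degree-d part = number of basis monomials with |a| = d *)
definition stanley_hilbert_fun :: "nat \<Rightarrow> (nat \<Rightarrow> int) \<Rightarrow> (nat \<times> bool) set \<Rightarrow> nat \<Rightarrow> nat" where
  "stanley_hilbert_fun n u Z d = card {a \<in> stanley_monomials u Z. abs_deg n a = d}"

definition stanley_hilbert_series :: "nat \<Rightarrow> (nat \<Rightarrow> int) \<Rightarrow> (nat \<times> bool) set \<Rightarrow> int fps" where
  "stanley_hilbert_series n u Z = Abs_fps (\<lambda>d. int (stanley_hilbert_fun n u Z d))"

end

theory Submission
  imports Defs
begin


definition cntset :: "'a set \<Rightarrow> ('a \<Rightarrow> nat \<Rightarrow> nat) \<Rightarrow> nat \<Rightarrow> ('a \<Rightarrow> nat) set" where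
 "cntset Z \<phi> d = {c. (\<forall>z. z \<notin> Z \<longrightarrow> c z = 0) \<and> (\<Sum>z\<in>Z. \<phi> z (c z)) = d}"

lemma cntset_insert:
  assumes "j \<notin> Z" "finite Z"
  shows "cntset (insert j Z) \<phi> d = (\<lambda>(k,c'). c'(j:=k)) ` (\<Union>e\<in>{0..d}. {k. \<phi> j k = e} \<times> cntset Z \<phi> (d-e))"
proof (rule set_eqI, rule iffI)
  fix c assume c: "c \<in> cntset (insert j Z) \<phi> d"
  have s: "(\<Sum>z\<in>Z. \<phi> z ((c(j:=0)) z)) = (\<Sum>z\<in>Z. \<phi> z (c z))"
    using assms by (intro sum.cong) auto
  have "(c j, c(j:=0)) \<in> (\<Union>e\<in>{0..d}. {k. \<phi> j k = e} \<times> cntset Z \<phi> (d-e))"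
  proof -
    have "\<phi> j (c j) + (\<Sum>z\<in>Z. \<phi> z (c z)) = d"
      using c assms unfolding cntset_def by auto
    then show ?thesis using c s unfolding cntset_def by auto
  qed
  moreover have "c = (\<lambda>(k,c'). c'(j:=k)) (c j, c(j:=0))" by auto
  ultimately show "c \<in> (\<lambda>(k,c'). c'(j:=k)) ` (\<Union>e\<in>{0..d}. {k. \<phi> j k = e} \<times> cntset Z \<phi> (d-e))"
    by blast
next
  fix c assume "c \<in> (\<lambda>(k,c'). c'(j:=k)) ` (\<Union>e\<in>{0..d}. {k. \<phi> j k = e} \<times> cntset Z \<phi> (d-e))"
  then obtain k c' e where e: "e \<le> d" "\<phi> j k = e" "c' \<in> cntset Z \<phi> (d-e)" and c: "c = c'(j:=k)"
    by auto
  have s: "(\<Sum>z\<in>Z. \<phi> z (c z)) = (\<Sum>z\<in>Z. \<phi> z (c' z))"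
    using assms c by (intro sum.cong) auto
  have c1: "\<forall>z. z \<notin> insert j Z \<longrightarrow> c z = 0"
    using e(3) c unfolding cntset_def by auto
  have c2: "(\<Sum>z\<in>Z. \<phi> z (c' z)) = d - e" using e(3) unfolding cntset_def by auto
  have "(\<Sum>z\<in>insert j Z. \<phi> z (c z)) = \<phi> j (c j) + (\<Sum>z\<in>Z. \<phi> z (c z))"
    using assms by simp
  also have "\<dots> = d" using c2 s e(1,2) c by simp
  finally show "c \<in> cntset (insert j Z) \<phi> d" using c1 unfolding cntset_def by blast
qed

lemma cnt_prod:
  fixes \<phi> :: "'a \<Rightarrow> nat \<Rightarrow> nat"
  assumes "finite Z" "\<forall>z\<in>Z. \<forall>d. finite {k. \<phi> z k = d}"
  shows "(\<forall>d. finite (cntset Z \<phi> d)) \<and>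
    Abs_fps (\<lambda>d. int (card (cntset Z \<phi> d))) = (\<Prod>z\<in>Z. Abs_fps (\<lambda>d. int (card {k. \<phi> z k = d})))"
  using assms
proof (induction Z rule: finite_induct)
  case empty
  have e: "cntset {} \<phi> d = (if d = 0 then {\<lambda>_. 0} else {})" for d
    unfolding cntset_def by auto
  show ?case by (auto simp: e fps_eq_iff)
next
  case (insert j Z)
  let ?F = "\<lambda>e. {k. \<phi> j k = e}"
  let ?T = "\<lambda>d. (\<Union>e\<in>{0..d}. ?F e \<times> cntset Z \<phi> (d-e))"
  have IH: "\<And>d. finite (cntset Z \<phi> d)"
    "Abs_fps (\<lambda>d. int (card (cntset Z \<phi> d))) = (\<Prod>z\<in>Z. Abs_fps (\<lambda>d. int (card {k. \<phi> z k = d})))"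
    using insert by auto
  have Ff: "finite (?F e)" for e using insert by auto
  have Tf: "finite (?T d)" for d
    by (intro finite_UN_I finite_cartesian_product Ff IH) simp
  have inj: "inj_on (\<lambda>(k,c'). c'(j:=k)) (?T d)" for d
  proof (rule inj_onI)
    fix x y assume x: "x \<in> ?T d" and y: "y \<in> ?T d" and eq: "(\<lambda>(k,c'). c'(j:=k)) x = (\<lambda>(k,c'). c'(j:=k)) y"
    obtain k c' where xx: "x = (k,c')" by (cases x)
    obtain k2 c2 where yy: "y = (k2,c2)" by (cases y)
    have "c' j = 0" "c2 j = 0" using x y xx yy insert(2) unfolding cntset_def by auto
    moreover have e2: "c'(j:=k) = c2(j:=k2)" using eq xx yy by simp
    ultimately have "k = k2" by (metis fun_upd_same)
    moreover have "c' = c2"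
    proof
      fix z show "c' z = c2 z"
        using e2 \<open>c' j = 0\<close> \<open>c2 j = 0\<close> by (cases "z = j") (auto dest: fun_cong[where x=z])
    qed
    ultimately show "x = y" using xx yy by simp
  qed
  have card: "card (cntset (insert j Z) \<phi> d) = (\<Sum>e=0..d. card (?F e) * card (cntset Z \<phi> (d-e)))" for d
  proof -
    have "card (cntset (insert j Z) \<phi> d) = card (?T d)"
      unfolding cntset_insert[OF insert(2) insert(1)] by (rule card_image[OF inj])
    also have "\<dots> = (\<Sum>e=0..d. card (?F e \<times> cntset Z \<phi> (d-e)))"
      apply (rule card_UN_disjoint)
        apply simp
       apply (simp add: Ff IH)
      apply blast
      done
    also have "\<dots> = (\<Sum>e=0..d. card (?F e) * card (cntset Z \<phi> (d-e)))"
      by (simp add: card_cartesian_product)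
    finally show ?thesis .
  qed
  have fin: "finite (cntset (insert j Z) \<phi> d)" for d
    using cntset_insert[OF insert(2) insert(1)] Tf by simp
  have "Abs_fps (\<lambda>d. int (card (cntset (insert j Z) \<phi> d))) =
        Abs_fps (\<lambda>d. int (card (?F d))) * Abs_fps (\<lambda>d. int (card (cntset Z \<phi> d)))"
    by (simp add: fps_eq_iff fps_mult_nth card)
  also have "\<dots> = (\<Prod>z\<in>insert j Z. Abs_fps (\<lambda>d. int (card {k. \<phi> z k = d})))"
    using IH insert by simp
  finally show ?case using fin by blast
qed



lemma fps_mult_1mX_nth:
  fixes h :: "nat \<Rightarrow> int"
  shows "(Abs_fps h * (1 - fps_X)) $ d = h d - (if d = 0 then 0 else h (d - 1))"
proof -
  have "Abs_fps h * (1 - fps_X) = Abs_fps h - fps_X * Abs_fps h" by (simp add: right_diff_distrib mult.commute)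
  then show ?thesis by (simp add: fps_X_mult_nth)
qed

lemma fiber_pos:
  assumes "v \<ge> 0"
  shows "{k::nat. nat \<bar>v + int k\<bar> = d} = (if nat v \<le> d then {d - nat v} else {})"
  using assms by auto

lemma fiber_neg:
  assumes "v = - int N"
  shows "{k::nat. nat \<bar>v + int k\<bar> = d} =
     (if d = 0 then {N} else if d \<le> N then {N - d, N + d} else {N + d})"
  using assms by auto

lemma one_var:
  fixes v :: int
  shows "(\<forall>d. finite {k::nat. nat \<bar>v + int k\<bar> = d}) \<and>
    (\<exists>P::int poly. poly P 1 = 1 \<and>
      Abs_fps (\<lambda>d. int (card {k::nat. nat \<bar>v + int k\<bar> = d})) * (1 - fps_X) = fps_of_poly P)"
proof (cases "v \<ge> 0")
  case True
  have c: "int (card {k::nat. nat \<bar>v + int k\<bar> = d}) = (if nat v \<le> d then 1 else 0)" for d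
    unfolding fiber_pos[OF True] by simp
  have "Abs_fps (\<lambda>d. int (card {k::nat. nat \<bar>v + int k\<bar> = d})) * (1 - fps_X) =
      fps_of_poly (monom 1 (nat v))"
    unfolding fps_eq_iff fps_mult_1mX_nth c by (auto simp: coeff_monom)
  moreover have "poly (monom (1::int) (nat v)) 1 = 1" by (simp add: poly_monom)
  ultimately show ?thesis unfolding fiber_pos[OF True] by auto
next
  case False
  define N where "N = nat (- v)"
  have v: "v = - int N" "N \<ge> 1" using False unfolding N_def by auto
  have c: "int (card {k::nat. nat \<bar>v + int k\<bar> = d}) = (if d = 0 then 1 else if d \<le> N then 2 else 1)" for d
    unfolding fiber_neg[OF v(1)] by auto
  define P :: "int poly" where "P = 1 + monom 1 1 - monom 1 (N + 1)"
  have "Abs_fps (\<lambda>d. int (card {k::nat. nat \<bar>v + int k\<bar> = d})) * (1 - fps_X) = fps_of_poly P"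
    unfolding fps_eq_iff fps_mult_1mX_nth c using v(2)
    by (auto simp: P_def coeff_monom)
  moreover have "poly P 1 = 1" by (simp add: P_def poly_monom)
  ultimately show ?thesis unfolding fiber_neg[OF v(1)] by auto
qed


theorem lemma6p4:
  fixes n :: nat and A :: "nat set" and u :: "nat \<Rightarrow> int" and Z :: "(nat \<times> bool) set"
  assumes "is_stanley_space n A u Z"
  shows "\<exists>Q :: int poly. poly Q 1 = 1 \<and>
           stanley_hilbert_series n u Z * (1 - fps_X) ^ card Z = fps_of_poly Q"
proof -
  have AS: "A \<subseteq> {1..n}" "Z \<subseteq> Sf_vars n A" "\<forall>j\<in>A. \<not> ((j, True) \<in> Z \<and> (j, False) \<in> Z)"
    "inj_on (stanley_exp u Z) (Z_monomials Z)"
    using assms unfolding is_stanley_space_def by auto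
  have Zsub: "Z \<subseteq> {1..n} \<times> UNIV" using AS(1,2) unfolding Sf_vars_def by auto
  have finZ: "finite Z" by (rule finite_subset[OF Zsub]) simp
  have fstZ: "fst z \<in> {1..n}" if "z \<in> Z" for z using Zsub that by auto
  have injfst: "inj_on fst Z"
  proof (rule inj_onI)
    fix x y assume x: "x \<in> Z" and y: "y \<in> Z" and e: "fst x = fst y"
    obtain j b where xx: "x = (j, b)" by (cases x)
    obtain b2 where yy: "y = (j, b2)" using e xx by (cases y) auto
    show "x = y"
    proof (rule ccontr)
      assume "x \<noteq> y"
      then have "b \<noteq> b2" using xx yy by simp
      then have "(j, True) \<in> Z" "(j, False) \<in> Z" using x y xx yy by (cases b; auto)+
      moreover have "j \<in> A" using \<open>(j, False) \<in> Z\<close> AS(2) unfolding Sf_vars_def by auto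
      ultimately show False using AS(3) by blast
    qed
  qed
  define sg :: "nat \<times> bool \<Rightarrow> int" where "sg z = (if snd z then 1 else -1)" for z
  define \<phi> :: "nat \<times> bool \<Rightarrow> nat \<Rightarrow> nat" where "\<phi> z k = nat \<bar>u (fst z) + int k * sg z\<bar>" for z k
  define C :: int where "C = (\<Sum>i\<in>{1..n} - fst ` Z. \<bar>u i\<bar>)"
  have C0: "C \<ge> 0" unfolding C_def by (simp add: sum_nonneg)
  have se: "stanley_exp u Z c (fst z) = u (fst z) + int (c z) * sg z" if "z \<in> Z" for c z
  proof -
    have "(\<Sum>y\<in>Z. int (c y) * var_exp y (fst z)) = int (c z) * var_exp z (fst z) + (\<Sum>y\<in>Z - {z}. int (c y) * var_exp y (fst z))"
      using finZ that by (simp add: sum.remove)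
    moreover have "(\<Sum>y\<in>Z - {z}. int (c y) * var_exp y (fst z)) = 0"
    proof (rule sum.neutral, rule ballI)
      fix y assume "y \<in> Z - {z}"
      then have "fst y \<noteq> fst z" using inj_onD[OF injfst, of y z] that by blast
      then show "int (c y) * var_exp y (fst z) = 0" unfolding var_exp_def by auto
    qed
    ultimately show ?thesis unfolding stanley_exp_def var_exp_def sg_def by auto
  qed
  have se0: "stanley_exp u Z c i = u i" if "i \<notin> fst ` Z" for c i
  proof -
    have "(\<Sum>y\<in>Z. int (c y) * var_exp y i) = 0"
      by (rule sum.neutral) (use that in \<open>auto simp: var_exp_def\<close>)
    then show ?thesis unfolding stanley_exp_def by simp
  qed
  have deg: "abs_deg n (stanley_exp u Z c) = nat C + (\<Sum>z\<in>Z. \<phi> z (c z))" for c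
  proof -
    have sub: "fst ` Z \<subseteq> {1..n}" using fstZ by auto
    have "(\<Sum>i\<in>{1..n}. \<bar>stanley_exp u Z c i\<bar>) =
        (\<Sum>i\<in>{1..n} - fst ` Z. \<bar>stanley_exp u Z c i\<bar>) + (\<Sum>i\<in>fst ` Z. \<bar>stanley_exp u Z c i\<bar>)"
      using sum.subset_diff[OF sub] by simp
    also have "(\<Sum>i\<in>{1..n} - fst ` Z. \<bar>stanley_exp u Z c i\<bar>) = C"
      unfolding C_def by (rule sum.cong) (auto simp: se0)
    also have "(\<Sum>i\<in>fst ` Z. \<bar>stanley_exp u Z c i\<bar>) = (\<Sum>z\<in>Z. \<bar>stanley_exp u Z c (fst z)\<bar>)"
      by (rule sum.reindex[OF injfst, unfolded comp_def])
    also have "\<dots> = (\<Sum>z\<in>Z. int (\<phi> z (c z)))"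
      by (rule sum.cong) (auto simp: se \<phi>_def)
    also have "(\<Sum>z\<in>Z. int (\<phi> z (c z))) = int (\<Sum>z\<in>Z. \<phi> z (c z))"
      by (simp only: of_nat_sum)
    finally have e: "(\<Sum>i\<in>{1..n}. \<bar>stanley_exp u Z c i\<bar>) = C + int (\<Sum>z\<in>Z. \<phi> z (c z))" .
    have na: "nat (C + int s) = nat C + s" for s :: nat
      using C0 by linarith
    have "nat (C + int (\<Sum>z\<in>Z. \<phi> z (c z))) = nat C + (\<Sum>z\<in>Z. \<phi> z (c z))"
      by (rule na)
    then show ?thesis unfolding abs_deg_def e .
  qed
  have phi_one: "(\<forall>d. finite {k. \<phi> z k = d}) \<and>
      (\<exists>P::int poly. poly P 1 = 1 \<and> Abs_fps (\<lambda>d. int (card {k. \<phi> z k = d})) * (1 - fps_X) = fps_of_poly P)"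
    for z
  proof -
    have "\<phi> z k = nat \<bar>u (fst z) * sg z + int k\<bar>" for k
    proof -
      have "u (fst z) + int k * sg z = sg z * (u (fst z) * sg z + int k)"
        unfolding sg_def by auto
      then have "\<bar>u (fst z) + int k * sg z\<bar> = \<bar>u (fst z) * sg z + int k\<bar>"
        by (simp add: abs_mult sg_def)
      then show ?thesis unfolding \<phi>_def by simp
    qed
    then show ?thesis using one_var[of "u (fst z) * sg z"] by simp
  qed
  then have finphi: "\<forall>z\<in>Z. \<forall>d. finite {k. \<phi> z k = d}" by blast
  obtain P where P: "\<And>z. poly (P z) 1 = (1::int)"
     "\<And>z. Abs_fps (\<lambda>d. int (card {k. \<phi> z k = d})) * (1 - fps_X) = fps_of_poly (P z)"
    using phi_one by metis
  note cp = cnt_prod[OF finZ finphi]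
  have hf: "stanley_hilbert_fun n u Z d = (if nat C \<le> d then card (cntset Z \<phi> (d - nat C)) else 0)" for d
  proof -
    have "{a \<in> stanley_monomials u Z. abs_deg n a = d} =
        stanley_exp u Z ` {c \<in> Z_monomials Z. abs_deg n (stanley_exp u Z c) = d}"
      unfolding stanley_monomials_def by blast
    then have "stanley_hilbert_fun n u Z d = card {c \<in> Z_monomials Z. abs_deg n (stanley_exp u Z c) = d}"
      unfolding stanley_hilbert_fun_def
      using card_image[OF inj_on_subset[OF AS(4)]] by (metis (no_types, lifting) mem_Collect_eq subsetI)
    also have "{c \<in> Z_monomials Z. abs_deg n (stanley_exp u Z c) = d} =
       (if nat C \<le> d then cntset Z \<phi> (d - nat C) else {})"
      unfolding deg cntset_def Z_monomials_def by auto
    finally show ?thesis by simp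
  qed
  have H: "stanley_hilbert_series n u Z = fps_X ^ nat C * Abs_fps (\<lambda>d. int (card (cntset Z \<phi> d)))"
    unfolding stanley_hilbert_series_def fps_eq_iff fps_X_power_mult_nth hf by auto
  have "stanley_hilbert_series n u Z * (1 - fps_X) ^ card Z =
      fps_X ^ nat C * ((\<Prod>z\<in>Z. Abs_fps (\<lambda>d. int (card {k. \<phi> z k = d}))) * (\<Prod>z\<in>Z. (1 - fps_X)))"
    unfolding H cp[THEN conjunct2, symmetric] by (simp add: mult.assoc)
  also have "\<dots> = fps_X ^ nat C * (\<Prod>z\<in>Z. Abs_fps (\<lambda>d. int (card {k. \<phi> z k = d})) * (1 - fps_X))"
    by (simp only: prod.distrib)
  also have "\<dots> = fps_X ^ nat C * (\<Prod>z\<in>Z. fps_of_poly (P z))"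
    by (simp only: P(2))
  also have "\<dots> = fps_of_poly (monom 1 (nat C) * (\<Prod>z\<in>Z. P z))"
    by (simp add: fps_of_poly_mult fps_of_poly_prod fps_of_poly_monom')
  finally show ?thesis
    by (intro exI[of _ "monom 1 (nat C) * (\<Prod>z\<in>Z. P z)"]) (simp add: poly_monom poly_prod P(1))
qed

end
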